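(* Let $(X,\Sigma)$ be a measurable space, $(\mathcal{E}_t)_{t\ge0}$ a process of pavings, $\mathbf{F}_0^2\subseteq\mathbf{F}\times\mathbf{F}$ a nonempty set of pairs, $\boldsymbol{\mu}=(\mu_t)_{t\ge0}$ a nonincreasing family of monotone measures on $\Sigma$, and $\mathscr{A}=\{\mathsf{A}_t(\cdot|E)\colon E\in\mathcal{E}_t,\,t\ge0\}$ a nonincreasing parametric family of conditional aggregation operators which is $c$-quasi-subadditive on $\mathbf{F}_0^2$ (for some $c\in[1,\infty)$). Then $$\boldsymbol{\mu}_{\mathscr{A}}(f+g,ct)\le\boldsymbol{\mu}_{\mathscr{A}}(f,\lambda t)\vee\boldsymbol{\mu}_{\mathscr{A}}(g,(1-\lambda)t)$$ for every $t\ge0$, every $\lambda\in(0,1)$ and every $(f,g)\in\mathbf{F}_0^2$.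
   Context: $a\vee b=\max\{a,b\}$. $\Sigma^0=\Sigma\setminus\{\emptyset\}$. $\mathbf{F}$ denotes the set of all $\Sigma$-measurable, nonnegative, bounded functions $f\colon X\to[0,\infty)$. A monotone measure is a map $\mu\colon\Sigma\to[0,\infty]$ with $\mu(B)\le\mu(C)$ whenever $B\subseteq C$, $\mu(\emptyset)=0$ and $\mu(X)>0$. For $E\in\Sigma^0$, a conditional aggregation operator (CAO) w.r.t. $E$ is a map $\mathsf{A}(\cdot|E)\colon\mathbf{F}\to[0,\infty]$ such that (C1) $\mathsf{A}(f|E)\le\mathsf{A}(g|E)$ whenever $f(x)\le g(x)$ for all $x\in E$, and (C2) $\mathsf{A}(\mathbf{1}_{X\setminus E}|E)=0$. A process of pavings is a family $(\mathcal{E}_t)_{t\ge0}$ with $\emptyset\in\mathcal{E}_t\subseteq\Sigma$ for all $t$; $\mathcal{E}_t^0=\mathcal{E}_t\setminus\{\emptyset\}$. A parametric family of CAOs (pFCA) $\{\mathsf{A}_t(\cdot|E)\colon E\in\mathcal{E}_t,\,t\ge0\}$ consists of CAOs $\mathsf{A}_t(\cdot|E)$ w.r.t. $E$ for each $t$ and $E\in\mathcal{E}_t^0$, with the convention $\mathsf{A}_t(\cdot|\emptyset)=\infty$. The generalized level measure is $\boldsymbol{\mu}_{\mathscr{A}}(f,t)=\sup\{\mu_t(E)\colon \mathsf{A}_t(f|E)\ge t,\ E\in\mathcal{E}_t\}$ for $t\ge0$. $\boldsymbol{\mu}$ is nonincreasing if $\mu_s(E)\ge\mu_t(E)$ for all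 $E\in\Sigma$ and $s<t$. The pFCA is nonincreasing if $\mathcal{E}_t\subseteq\mathcal{E}_s$ and $\mathsf{A}_s(f|E)\ge\mathsf{A}_t(f|E)$ for all $f\in\mathbf{F}$, $E\in\mathcal{E}_t^0$, $0\le s<t$. It is $c$-quasi-subadditive on $\mathbf{F}_0^2$ if $c\in[1,\infty)$ and $\mathsf{A}_t(f+g|E)\le c(\mathsf{A}_t(f|E)+\mathsf{A}_t(g|E))$ for all $(f,g)\in\mathbf{F}_0^2$, all $E\in\mathcal{E}_t^0$ and all $t>0$. *)

theory Defs
  imports "HOL-Analysis.Analysis"
begin

text \<open>The measurable space (X, Sigma) is represented by a measure space M with
  space M = X and sets M = Sigma (its measure is irrelevant).\<close>

definition bndF :: "'a measure \<Rightarrow> ('a \<Rightarrow> real) set" where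
  "bndF M = {f. f \<in> borel_measurable M \<and> (\<forall>x\<in>space M. 0 \<le> f x)
                 \<and> (\<exists>B. \<forall>x\<in>space M. f x \<le> B)}"

definition monotone_measure :: "'a measure \<Rightarrow> ('a set \<Rightarrow> ennreal) \<Rightarrow> bool" where
  "monotone_measure M \<mu> \<longleftrightarrow>
     (\<forall>B\<in>sets M. \<forall>C\<in>sets M. B \<subseteq> C \<longrightarrow> \<mu> B \<le> \<mu> C) \<and> \<mu> {} = 0 \<and> \<mu> (space M) > 0"

definition CAO :: "'a measure \<Rightarrow> 'a set \<Rightarrow> (('a \<Rightarrow> real) \<Rightarrow> ennreal) \<Rightarrow> bool" where
  "CAO M E A \<longleftrightarrow>
     (\<forall>f\<in>bndF M. \<forall>g\<in>bndF M. (\<forall>x\<in>E. f x \<le> g x) \<longrightarrow> A f \<le> A g) \<and>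
     A (indicator (space M - E)) = 0"

definition paving_process :: "'a measure \<Rightarrow> (real \<Rightarrow> 'a set set) \<Rightarrow> bool" where
  "paving_process M \<E> \<longleftrightarrow> (\<forall>t\<ge>0. {} \<in> \<E> t \<and> \<E> t \<subseteq> sets M)"

definition pFCA :: "'a measure \<Rightarrow> (real \<Rightarrow> 'a set set)
                    \<Rightarrow> (real \<Rightarrow> 'a set \<Rightarrow> ('a \<Rightarrow> real) \<Rightarrow> ennreal) \<Rightarrow> bool" where
  "pFCA M \<E> A \<longleftrightarrow> paving_process M \<E> \<and>
     (\<forall>t\<ge>0. \<forall>E\<in>\<E> t - {{}}. CAO M E (A t E))"

definition Aext :: "(real \<Rightarrow> 'a set \<Rightarrow> ('a \<Rightarrow> real) \<Rightarrow> ennreal)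
                    \<Rightarrow> real \<Rightarrow> 'a set \<Rightarrow> ('a \<Rightarrow> real) \<Rightarrow> ennreal" where
  "Aext A t E f = (if E = {} then \<infinity> else A t E f)"

definition gen_level_measure ::
  "(real \<Rightarrow> 'a set \<Rightarrow> ennreal) \<Rightarrow> (real \<Rightarrow> 'a set set)
   \<Rightarrow> (real \<Rightarrow> 'a set \<Rightarrow> ('a \<Rightarrow> real) \<Rightarrow> ennreal) \<Rightarrow> ('a \<Rightarrow> real) \<Rightarrow> real \<Rightarrow> ennreal" where
  "gen_level_measure \<mu> \<E> A f t =
     Sup {\<mu> t E | E. E \<in> \<E> t \<and> Aext A t E f \<ge> ennreal t}"

definition nonincr_measure_family :: "'a measure \<Rightarrow> (real \<Rightarrow> 'a set \<Rightarrow> ennreal) \<Rightarrow> bool" where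
  "nonincr_measure_family M \<mu> \<longleftrightarrow>
     (\<forall>t\<ge>0. monotone_measure M (\<mu> t)) \<and>
     (\<forall>s t. 0 \<le> s \<and> s < t \<longrightarrow> (\<forall>E\<in>sets M. \<mu> t E \<le> \<mu> s E))"

definition nonincr_pFCA :: "'a measure \<Rightarrow> (real \<Rightarrow> 'a set set)
                    \<Rightarrow> (real \<Rightarrow> 'a set \<Rightarrow> ('a \<Rightarrow> real) \<Rightarrow> ennreal) \<Rightarrow> bool" where
  "nonincr_pFCA M \<E> A \<longleftrightarrow>
     (\<forall>s t. 0 \<le> s \<and> s < t \<longrightarrow> \<E> t \<subseteq> \<E> s \<and>
        (\<forall>f\<in>bndF M. \<forall>E\<in>\<E> t - {{}}. A t E f \<le> A s E f))"

definition quasi_subadditive :: "real \<Rightarrow> (('a \<Rightarrow> real) \<times> ('a \<Rightarrow> real)) set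
                    \<Rightarrow> (real \<Rightarrow> 'a set set)
                    \<Rightarrow> (real \<Rightarrow> 'a set \<Rightarrow> ('a \<Rightarrow> real) \<Rightarrow> ennreal) \<Rightarrow> bool" where
  "quasi_subadditive c F02 \<E> A \<longleftrightarrow> 1 \<le> c \<and>
     (\<forall>(f,g)\<in>F02. \<forall>t>0. \<forall>E\<in>\<E> t - {{}}.
        A t E (\<lambda>x. f x + g x) \<le> ennreal c * (A t E f + A t E g))"

end

theory Submission
  imports Defs
begin

lemma l1: "0 < (c::real) \<Longrightarrow> 0 \<le> t \<Longrightarrow> ennreal (c*t) \<le> ennreal c * x \<Longrightarrow> ennreal t \<le> x"
  by (simp add: ennreal_mult'' ennreal_mult_le_mult_iff)

lemma l2: "(a::ennreal) < ennreal u \<Longrightarrow> b < ennreal v \<Longrightarrow> 0 \<le> u \<Longrightarrow> 0\<le> v \<Longrightarrow> a + b < ennreal (u+v)"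
  by (metis add_mono_ennreal ennreal_plus)

theorem proposition3p14:
  fixes M :: "'a measure" and \<E> :: "real \<Rightarrow> 'a set set"
    and F02 :: "(('a \<Rightarrow> real) \<times> ('a \<Rightarrow> real)) set"
    and \<mu> :: "real \<Rightarrow> 'a set \<Rightarrow> ennreal"
    and A :: "real \<Rightarrow> 'a set \<Rightarrow> ('a \<Rightarrow> real) \<Rightarrow> ennreal"
    and c t lam :: real and f g :: "'a \<Rightarrow> real"
  assumes "F02 \<subseteq> bndF M \<times> bndF M" and "F02 \<noteq> {}"
    and "nonincr_measure_family M \<mu>"
    and "pFCA M \<E> A" and "nonincr_pFCA M \<E> A"
    and "quasi_subadditive c F02 \<E> A"
    and "0 \<le> t" and "0 < lam" and "lam < 1" and "(f, g) \<in> F02"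
  shows "gen_level_measure \<mu> \<E> A (\<lambda>x. f x + g x) (c * t)
         \<le> max (gen_level_measure \<mu> \<E> A f (lam * t))
               (gen_level_measure \<mu> \<E> A g ((1 - lam) * t))"
proof -
  have c1: "1 \<le> c" using assms(6) by (simp add: quasi_subadditive_def)
  have fF: "f \<in> bndF M" and gF: "g \<in> bndF M" using assms(1,10) by auto
  have mm: "\<And>s. 0 \<le> s \<Longrightarrow> monotone_measure M (\<mu> s)" using assms(3)
    by (simp add: nonincr_measure_family_def)
  have mdec: "\<And>s r E. 0 \<le> s \<Longrightarrow> s < r \<Longrightarrow> E \<in> sets M \<Longrightarrow> \<mu> r E \<le> \<mu> s E"
    using assms(3) by (simp add: nonincr_measure_family_def)
  have pav: "\<And>s. 0 \<le> s \<Longrightarrow> \<E> s \<subseteq> sets M" using assms(4)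
    by (simp add: pFCA_def paving_process_def)
  have Edec: "\<And>s r. 0 \<le> s \<Longrightarrow> s < r \<Longrightarrow> \<E> r \<subseteq> \<E> s"
    using assms(5) by (simp add: nonincr_pFCA_def)
  have Adec: "\<And>s r h E. 0 \<le> s \<Longrightarrow> s < r \<Longrightarrow> h \<in> bndF M \<Longrightarrow> E \<in> \<E> r \<Longrightarrow> E \<noteq> {}
     \<Longrightarrow> A r E h \<le> A s E h"
    using assms(5) unfolding nonincr_pFCA_def by blast
  have qs: "\<And>r E. r > 0 \<Longrightarrow> E \<in> \<E> r \<Longrightarrow> E \<noteq> {} \<Longrightarrow>
      A r E (\<lambda>x. f x + g x) \<le> ennreal c * (A r E f + A r E g)"
    using assms(6,10) unfolding quasi_subadditive_def by fastforce
  show ?thesis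
    unfolding gen_level_measure_def
  proof (rule Sup_least)
    fix y assume "y \<in> {\<mu> (c*t) E | E. E \<in> \<E> (c*t) \<and> Aext A (c*t) E (\<lambda>x. f x + g x) \<ge> ennreal (c*t)}"
    then obtain E where y: "y = \<mu> (c*t) E" and E: "E \<in> \<E> (c*t)"
      and EA: "Aext A (c*t) E (\<lambda>x. f x + g x) \<ge> ennreal (c*t)" by blast
    let ?S = "\<lambda>h s. {\<mu> s E | E. E \<in> \<E> s \<and> Aext A s E h \<ge> ennreal s}"
    show "y \<le> max (Sup (?S f (lam*t))) (Sup (?S g ((1-lam)*t)))"
    proof (cases "t = 0")
      case True
      have "y \<in> ?S f (lam*t)" using y E True by (auto simp: Aext_def)
      then have "y \<le> Sup (?S f (lam*t))" by (rule Sup_upper)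
      then show ?thesis by (simp add: le_max_iff_disj)
    next
      case False
      then have tp: "t > 0" using assms(7) by simp
      have ctp: "c*t > 0" using c1 tp by simp
      have ESM: "E \<in> sets M" using pav[of "c*t"] E ctp by auto
      show ?thesis
      proof (cases "E = {}")
        case True
        then have "y = 0" using y mm[of "c*t"] ctp by (simp add: monotone_measure_def)
        then show ?thesis by simp
      next
        case ne: False
        have "ennreal (c*t) \<le> ennreal c * (A (c*t) E f + A (c*t) E g)"
          using EA qs[OF ctp E ne] ne by (simp add: Aext_def)
        then have sum: "ennreal t \<le> A (c*t) E f + A (c*t) E g"
          using l1[of c t] c1 assms(7) by simp
        have lt1: "lam*t < c*t" using assms(9) c1 tp
          by (smt (verit, best) mult_less_cancel_right_disj)
        have lt2: "(1-lam)*t < c*t" using assms(8) c1 tp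
          by (smt (verit, best) mult_less_cancel_right_disj)
        have nn1: "0 \<le> lam*t" and nn2: "0 \<le> (1-lam)*t" using assms(7,8,9) by auto
        have "A (c*t) E f \<ge> ennreal (lam*t) \<or> A (c*t) E g \<ge> ennreal ((1-lam)*t)"
        proof (rule ccontr)
          assume "\<not> ?thesis"
          then have "A (c*t) E f + A (c*t) E g < ennreal (lam*t + (1-lam)*t)"
            using l2 nn1 nn2 by (simp add: not_le)
          also have "lam*t + (1-lam)*t = t" by (simp add: algebra_simps)
          finally show False using sum by simp
        qed
        then show ?thesis
        proof
          assume h: "A (c*t) E f \<ge> ennreal (lam*t)"
          have "A (c*t) E f \<le> A (lam*t) E f" using Adec[OF nn1 lt1 fF E ne] .
          then have "E \<in> \<E> (lam*t) \<and> Aext A (lam*t) E f \<ge> ennreal (lam*t)"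
            using h ne Edec[OF nn1 lt1] E by (auto simp: Aext_def)
          then have "\<mu> (lam*t) E \<in> ?S f (lam*t)" by blast
          then have "\<mu> (lam*t) E \<le> Sup (?S f (lam*t))" by (rule Sup_upper)
          moreover have "y \<le> \<mu> (lam*t) E" using y mdec[OF nn1 lt1 ESM] by simp
          ultimately show ?thesis by (meson order_trans max.cobounded1 max.cobounded2)
        next
          assume h: "A (c*t) E g \<ge> ennreal ((1-lam)*t)"
          have "A (c*t) E g \<le> A ((1-lam)*t) E g" using Adec[OF nn2 lt2 gF E ne] .
          then have "E \<in> \<E> ((1-lam)*t) \<and> Aext A ((1-lam)*t) E g \<ge> ennreal ((1-lam)*t)"
            using h ne Edec[OF nn2 lt2] E by (auto simp: Aext_def)
          then have "\<mu> ((1-lam)*t) E \<in> ?S g ((1-lam)*t)" by blast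
          then have "\<mu> ((1-lam)*t) E \<le> Sup (?S g ((1-lam)*t))" by (rule Sup_upper)
          moreover have "y \<le> \<mu> ((1-lam)*t) E" using y mdec[OF nn2 lt2 ESM] by simp
          ultimately show ?thesis by (meson order_trans max.cobounded1 max.cobounded2)
        qed
      qed
    qed
  qed
qed

end
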